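(* Let $n\ge 3$ and let $\mathfrak{f}_n$ be the $n$-dimensional complex (model) filiform Lie algebra with basis $\{e_i\}_{i=1}^n$ whose only nonzero brackets are $[e_1,e_h]=e_{h-1}$ for $3\le h\le n$. Then $\overline{\mu}(\mathfrak{f}_n)=n$. Moreover, the linear map sending $e_1\mapsto \sum_{i=1}^{n-2}X_{i,i+1}$ and $e_j\mapsto X_{j-1,n}$ for $2\le j\le n$ is an injective Lie algebra homomorphism $\mathfrak{f}_n\to\mathfrak{h}_n$ (a natural representative of a minimal faithful representation).
   Context: All Lie algebras are finite-dimensional over $\mathbb{C}$. For $m\in\mathbb N$, $\mathfrak{h}_m$ denotes the Lie algebra (with commutator bracket) of complex $m\times m$ upper-triangular matrices, and $X_{i,j}$ ($1\le i\le j\le m$) denotes the matrix unit with entry $1$ in position $(i,j)$ and $0$ elsewhere. For a solvable Lie algebra $\mathfrak g$, $\overline{\mu}(\mathfrak g)=\min\{m\in\mathbb N : \mathfrak{h}_m \text{ contains a Lie subalgebra isomorphic to } \mathfrak g\}$. *)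

theory Defs
  imports Complex_Main "Jordan_Normal_Form.Matrix"
begin

(* Conventions: indices in the paper are 1-based, JNF indices are 0-based.
   The paper's basis vector e_i of f_n is  unit_vec n (i-1);
   the paper's matrix unit X_{i,j} in h_m is  Xmat m i j  (entry (i-1,j-1) = 1). *)

definition Xmat :: "nat \<Rightarrow> nat \<Rightarrow> nat \<Rightarrow> complex mat" where
  "Xmat m i j = mat m m (\<lambda>(a,b). if a = i - 1 \<and> b = j - 1 then 1 else 0)"

definition upper_tri :: "nat \<Rightarrow> complex mat set" where
  "upper_tri m = {A \<in> carrier_mat m m. \<forall>i<m. \<forall>j<i. A $$ (i,j) = 0}"

definition commutator :: "complex mat \<Rightarrow> complex mat \<Rightarrow> complex mat" where
  "commutator A B = A * B - B * A"

definition lie_subalgebra_h :: "nat \<Rightarrow> complex mat set \<Rightarrow> bool" where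
  "lie_subalgebra_h m L \<longleftrightarrow> L \<subseteq> upper_tri m \<and> 0\<^sub>m m m \<in> L \<and>
     (\<forall>A\<in>L. \<forall>B\<in>L. A + B \<in> L) \<and> (\<forall>c. \<forall>A\<in>L. c \<cdot>\<^sub>m A \<in> L) \<and>
     (\<forall>A\<in>L. \<forall>B\<in>L. commutator A B \<in> L)"

text \<open>A Lie algebra is given by its underlying space C^d (carrier_vec d) and a bracket.
  phi is a Lie algebra isomorphism from (C^d, br) onto L.\<close>
definition lie_iso :: "nat \<Rightarrow> (complex vec \<Rightarrow> complex vec \<Rightarrow> complex vec) \<Rightarrow> complex mat set
    \<Rightarrow> (complex vec \<Rightarrow> complex mat) \<Rightarrow> bool" where
  "lie_iso d br L \<phi> \<longleftrightarrow> bij_betw \<phi> (carrier_vec d) L \<and>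
     (\<forall>x\<in>carrier_vec d. \<forall>y\<in>carrier_vec d. \<phi> (x + y) = \<phi> x + \<phi> y) \<and>
     (\<forall>c. \<forall>x\<in>carrier_vec d. \<phi> (c \<cdot>\<^sub>v x) = c \<cdot>\<^sub>m \<phi> x) \<and>
     (\<forall>x\<in>carrier_vec d. \<forall>y\<in>carrier_vec d. \<phi> (br x y) = commutator (\<phi> x) (\<phi> y))"

definition mu_bar :: "nat \<Rightarrow> (complex vec \<Rightarrow> complex vec \<Rightarrow> complex vec) \<Rightarrow> nat" where
  "mu_bar d br = (LEAST m. \<exists>L \<phi>. lie_subalgebra_h m L \<and> lie_iso d br L \<phi>)"

text \<open>Structure constants of the model filiform algebra f_n (0-based indices):
  [e_1, e_h] = e_{h-1} for 3 <= h <= n, i.e. [unit 0, unit j] = unit (j-1) for j >= 2,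
  together with antisymmetry; all other basis brackets are zero.\<close>
definition fil_basis_br :: "nat \<Rightarrow> nat \<Rightarrow> nat \<Rightarrow> complex vec" where
  "fil_basis_br n i j =
     (if i = 0 \<and> 2 \<le> j \<and> j < n then unit_vec n (j - 1)
      else if j = 0 \<and> 2 \<le> i \<and> i < n then - unit_vec n (i - 1)
      else 0\<^sub>v n)"

definition fil_br :: "nat \<Rightarrow> complex vec \<Rightarrow> complex vec \<Rightarrow> complex vec" where
  "fil_br n x y = vec n (\<lambda>k. \<Sum>i<n. \<Sum>j<n. x $ i * y $ j * (fil_basis_br n i j) $ k)"

definition fil_rep :: "nat \<Rightarrow> complex vec \<Rightarrow> complex mat" where
  "fil_rep n x = mat n n (\<lambda>ab.
      x $ 0 * (\<Sum>i=1..n-2. Xmat n i (i+1) $$ ab)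
      + (\<Sum>j=2..n. x $ (j - 1) * Xmat n (j - 1) n $$ ab))"

end

theory Submission
  imports Defs
begin


definition Fl :: "nat \<Rightarrow> nat \<Rightarrow> complex mat \<Rightarrow> bool" where
 "Fl m l X \<longleftrightarrow> (\<forall>i<m. \<forall>j<m. j < i + l \<longrightarrow> X $$ (i,j) = 0)"

lemma mult_entry:
  assumes "A \<in> carrier_mat m m" "B \<in> carrier_mat m m" "i<m" "j<m"
  shows "(A*B) $$ (i,j) = (\<Sum>k<m. A$$(i,k) * B$$(k,j))"
  using assms by (auto simp add: scalar_prod_def lessThan_atLeast0 intro!: sum.cong)

lemma comm_carrier:
  "A \<in> carrier_mat m m \<Longrightarrow> B \<in> carrier_mat m m \<Longrightarrow> commutator A B \<in> carrier_mat m m"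
  unfolding commutator_def by auto

lemma comm_entry:
  assumes "A \<in> carrier_mat m m" "B \<in> carrier_mat m m" "i<m" "j<m"
  shows "commutator A B $$ (i,j) = (\<Sum>k<m. A$$(i,k) * B$$(k,j)) - (\<Sum>k<m. B$$(i,k) * A$$(k,j))"
proof -
  have "(A * B - B * A) $$ (i,j) = (A*B) $$ (i,j) - (B*A) $$ (i,j)"
    using assms by (subst index_minus_mat) auto
  moreover have "(A*B) $$ (i,j) = (\<Sum>k<m. A$$(i,k) * B$$(k,j))" by (rule mult_entry[OF assms])
  moreover have "(B*A) $$ (i,j) = (\<Sum>k<m. B$$(i,k) * A$$(k,j))" by (rule mult_entry[OF assms(2,1,3,4)])
  ultimately show ?thesis unfolding commutator_def by simp
qed

lemma sum_only:
  assumes "k<(m::nat)" "\<And>x. x<m \<Longrightarrow> x \<noteq> k \<Longrightarrow> f x = 0"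
  shows "(\<Sum>x<m. f x) = (f k :: complex)"
proof -
  have "(\<Sum>x<m. f x) = (\<Sum>x\<in>{k}. f x)"
    by (rule sum.mono_neutral_right) (use assms in \<open>auto simp: finite_lessThan\<close>)
  thus ?thesis by simp
qed

lemma sum_zero:
  assumes "\<And>x. x<m \<Longrightarrow> f x = 0"
  shows "(\<Sum>x<m. f x) = (0 :: complex)"
  using assms by simp

lemma level_comm:
  assumes A: "A \<in> carrier_mat m m" "Fl m 0 A" and X: "X \<in> carrier_mat m m" "Fl m l X"
  shows "Fl m l (commutator A X)"
proof -
  { fix i j assume ij: "i<m" "j<m" "j < i + l"
    have "(\<Sum>k<m. A$$(i,k) * X$$(k,j)) = 0"
    proof (rule sum_zero)
      fix k assume "k<m"
      show "A$$(i,k) * X$$(k,j) = 0"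
        using A(2) X(2) ij \<open>k<m\<close> unfolding Fl_def
        by (cases "k < i") auto
    qed
    moreover have "(\<Sum>k<m. X$$(i,k) * A$$(k,j)) = 0"
    proof (rule sum_zero)
      fix k assume "k<m"
      show "X$$(i,k) * A$$(k,j) = 0"
        using A(2) X(2) ij \<open>k<m\<close> unfolding Fl_def
        by (cases "k < i + l") auto
    qed
    ultimately have "commutator A X $$ (i,j) = 0" using comm_entry[OF A(1) X(1) ij(1,2)] by simp }
  thus ?thesis unfolding Fl_def by auto
qed

lemma level_comm_entry:
  assumes A: "A \<in> carrier_mat m m" "Fl m 0 A" and X: "X \<in> carrier_mat m m" "Fl m l X"
    and i: "i + l < m"
  shows "commutator A X $$ (i, i+l) = (A$$(i,i) - A$$(i+l,i+l)) * X$$(i,i+l)"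
proof -
  have "(\<Sum>k<m. A$$(i,k) * X$$(k,i+l)) = A$$(i,i) * X$$(i,i+l)"
  proof (rule sum_only)
    fix k assume "k<m" "k \<noteq> i"
    show "A$$(i,k) * X$$(k,i+l) = 0"
      using A(2) X(2) i \<open>k<m\<close> \<open>k\<noteq>i\<close> unfolding Fl_def
      by (cases "k < i") auto
  qed (use i in auto)
  moreover have "(\<Sum>k<m. X$$(i,k) * A$$(k,i+l)) = X$$(i,i+l) * A$$(i+l,i+l)"
  proof (rule sum_only)
    fix k assume "k<m" "k \<noteq> i+l"
    show "X$$(i,k) * A$$(k,i+l) = 0"
      using A(2) X(2) i \<open>k<m\<close> \<open>k\<noteq>i+l\<close> unfolding Fl_def
      by (cases "k < i + l") auto
  qed (use i in auto)
  ultimately show ?thesis using comm_entry[OF A(1) X(1), of i "i+l"] i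
    by (simp add: algebra_simps)
qed

definition adp :: "complex mat \<Rightarrow> nat \<Rightarrow> complex mat \<Rightarrow> complex mat" where
  "adp A k X = ((\<lambda>Y. commutator A Y) ^^ k) X"

lemma adp_Suc: "adp A (Suc k) X = commutator A (adp A k X)"
  by (simp add: adp_def)

lemma adp_Suc2: "adp A (Suc k) X = adp A k (commutator A X)"
  by (simp add: adp_def funpow_Suc_right del: funpow.simps)

lemma adp_add: "adp A (a + b) X = adp A a (adp A b X)"
  by (simp add: adp_def funpow_add)

lemma adp_0[simp]: "adp A 0 X = X" by (simp add: adp_def)

lemma adp_carrier:
  "A \<in> carrier_mat m m \<Longrightarrow> X \<in> carrier_mat m m \<Longrightarrow> adp A k X \<in> carrier_mat m m"
  by (induction k) (auto simp: adp_Suc comm_carrier)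

lemma comm_zero: "A \<in> carrier_mat m m \<Longrightarrow> commutator A (0\<^sub>m m m) = 0\<^sub>m m m"
  unfolding commutator_def by auto

lemma adp_zero: "A \<in> carrier_mat m m \<Longrightarrow> adp A k (0\<^sub>m m m) = 0\<^sub>m m m"
  by (induction k) (auto simp: adp_Suc comm_zero)

lemma level_iter:
  assumes A: "A \<in> carrier_mat m m" "Fl m 0 A" and X: "X \<in> carrier_mat m m" "Fl m l X"
  shows "Fl m l (adp A k X) \<and> (\<forall>i. i + l < m \<longrightarrow>
     adp A k X $$ (i, i+l) = (A$$(i,i) - A$$(i+l,i+l))^k * X$$(i,i+l))"
proof (induction k)
  case 0 then show ?case using X by simp
next
  case (Suc k)
  have c: "adp A k X \<in> carrier_mat m m" using adp_carrier A X by blast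
  show ?case using Suc level_comm[OF A c] level_comm_entry[OF A c]
    by (simp add: adp_Suc)
qed

lemma raise:
  assumes A: "A \<in> carrier_mat m m" "Fl m 0 A" and X: "X \<in> carrier_mat m m" "Fl m l X"
    and K: "adp A K X = 0\<^sub>m m m"
  shows "Fl m (Suc l) (commutator A X)"
  unfolding Fl_def
proof (intro allI impI)
  fix i j assume ij: "i<m" "j<m" "j < i + Suc l"
  show "commutator A X $$ (i,j) = 0"
  proof (cases "j < i + l")
    case True thus ?thesis using level_comm[OF A X] ij unfolding Fl_def by auto
  next
    case False
    hence j: "j = i + l" using ij by auto
    have "(A$$(i,i) - A$$(i+l,i+l))^K * X$$(i,i+l) = 0"
      using level_iter[OF A X, of K] K ij j by auto
    hence "(A$$(i,i) - A$$(i+l,i+l)) = 0 \<or> X$$(i,i+l) = 0" by auto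
    thus ?thesis using level_comm_entry[OF A X, of i] ij j by auto
  qed
qed

lemma raise_iter:
  assumes A: "A \<in> carrier_mat m m" "Fl m 0 A" and X: "X \<in> carrier_mat m m" "Fl m l X"
    and K: "adp A K X = 0\<^sub>m m m"
  shows "Fl m (l + t) (adp A t X)"
proof (induction t)
  case 0 then show ?case using X by simp
next
  case (Suc t)
  have c: "adp A t X \<in> carrier_mat m m" using adp_carrier A X by blast
  have "adp A K (adp A t X) = 0\<^sub>m m m"
    using K adp_add[of A K t X] adp_add[of A t K X] adp_zero[OF A(1)] by (simp add: add.commute)
  from raise[OF A c Suc this] show ?case by (simp add: adp_Suc)
qed

lemma sum_two:
  assumes "Suc k<(m::nat)" "\<And>x. x<m \<Longrightarrow> x \<noteq> k \<Longrightarrow> x \<noteq> Suc k \<Longrightarrow> f x = 0"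
  shows "(\<Sum>x<m. f x) = (f k + f (Suc k) :: complex)"
proof -
  have "(\<Sum>x<m. f x) = (\<Sum>x\<in>{k, Suc k}. f x)"
    by (rule sum.mono_neutral_right) (use assms in \<open>auto simp: finite_lessThan\<close>)
  thus ?thesis by simp
qed

lemma Fl_zero:
  assumes "X \<in> carrier_mat m m" "Fl m l X" "m \<le> l"
  shows "X = 0\<^sub>m m m"
  using assms unfolding Fl_def by (intro eq_matI) auto

lemma chain_bound:
  assumes A: "A \<in> carrier_mat m m" "Fl m 0 A" and C: "C \<in> carrier_mat m m" "Fl m 0 C"
    and n: "n \<ge> 3"
    and kill: "adp A (n-1) C = 0\<^sub>m m m"
    and nz: "adp A (n-2) C \<noteq> 0\<^sub>m m m"
    and comm: "commutator C (commutator A C) = 0\<^sub>m m m"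
  shows "n \<le> m"
proof (rule ccontr)
  assume nm: "\<not> n \<le> m"
  define C1 where "C1 = commutator A C"
  have C1c: "C1 \<in> carrier_mat m m" unfolding C1_def using A C comm_carrier by blast
  have F1: "Fl m 1 C1" unfolding C1_def using raise[OF A C kill] by simp
  have e1: "adp A (n-1) C = adp A (n-2) C1"
  proof -
    have "n - 1 = Suc (n-2)" using n by simp
    thus ?thesis using adp_Suc2[of A "n-2" C] unfolding C1_def by simp
  qed
  have kill1: "adp A (n-2) C1 = 0\<^sub>m m m" using kill e1 by simp
  have F2: "Fl m 2 C1" unfolding Fl_def
  proof (intro allI impI)
    fix i j assume ij: "i<m" "j<m" "j < i + 2"
    show "C1 $$ (i,j) = 0"
    proof (cases "j < i + 1")
      case True thus ?thesis using F1 ij unfolding Fl_def by auto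
    next
      case False
      hence j: "j = Suc i" using ij by auto
      have "(A$$(i,i) - A$$(i+1,i+1))^(n-2) * C1$$(i,i+1) = 0"
        using level_iter[OF A C1c F1, of "n-2"] kill1 ij j by auto
      hence alt: "A$$(i,i) = A$$(Suc i,Suc i) \<or> C1$$(i,Suc i) = 0" by auto
      have "commutator C C1 $$ (i, i+1) = (C$$(i,i) - C$$(i+1,i+1)) * C1$$(i,i+1)"
        by (rule level_comm_entry[OF C C1c F1]) (use ij j in auto)
      hence cz: "(C$$(i,i) - C$$(Suc i,Suc i)) * C1$$(i,Suc i) = 0"
        using comm ij j unfolding C1_def by simp
      have s1: "(\<Sum>k<m. A$$(i,k) * C$$(k,Suc i)) = A$$(i,i) * C$$(i,Suc i) + A$$(i,Suc i) * C$$(Suc i,Suc i)"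
      proof (rule sum_two)
        fix x assume "x<m" "x\<noteq>i" "x \<noteq> Suc i"
        thus "A$$(i,x) * C$$(x,Suc i) = 0" using A(2) C(2) ij unfolding Fl_def
          by (cases "x < i") auto
      qed (use ij j in auto)
      have s2: "(\<Sum>k<m. C$$(i,k) * A$$(k,Suc i)) = C$$(i,i) * A$$(i,Suc i) + C$$(i,Suc i) * A$$(Suc i,Suc i)"
      proof (rule sum_two)
        fix x assume "x<m" "x\<noteq>i" "x \<noteq> Suc i"
        thus "C$$(i,x) * A$$(x,Suc i) = 0" using A(2) C(2) ij unfolding Fl_def
          by (cases "x < i") auto
      qed (use ij j in auto)
      have ent: "C1 $$ (i, Suc i) = A$$(i,i) * C$$(i,Suc i) + A$$(i,Suc i) * C$$(Suc i,Suc i)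
          - (C$$(i,i) * A$$(i,Suc i) + C$$(i,Suc i) * A$$(Suc i,Suc i))"
        unfolding C1_def using comm_entry[OF A(1) C(1) ij(1), of "Suc i"] s1 s2 ij j by simp
      show ?thesis
      proof (cases "C1$$(i,Suc i) = 0")
        case True thus ?thesis using j by simp
      next
        case False
        hence aa: "A$$(i,i) = A$$(Suc i,Suc i)" using alt by auto
        have dd: "C$$(i,i) = C$$(Suc i,Suc i)" using cz False by auto
        have "C1$$(i,Suc i) = 0" using ent aa dd by (simp add: algebra_simps)
        thus ?thesis using False by simp
      qed
    qed
  qed
  have "Fl m (2 + (n-3)) (adp A (n-3) C1)"
    by (rule raise_iter[OF A C1c F2 kill1])
  moreover have "adp A (n-3) C1 = adp A (n-2) C"
  proof -
    have "n - 2 = Suc (n-3)" using n by simp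
    thus ?thesis using adp_Suc2[of A "n-3" C] unfolding C1_def by simp
  qed
  moreover have "2 + (n-3) = n - 1" using n by simp
  ultimately have "Fl m (n-1) (adp A (n-2) C)" by simp
  hence "adp A (n-2) C = 0\<^sub>m m m"
    by (rule Fl_zero[OF adp_carrier[OF A(1) C(1)]]) (use nm in auto)
  thus False using nz by simp
qed




lemma rep_carrier: "fil_rep n x \<in> carrier_mat n n"
  unfolding fil_rep_def by simp

lemma Xsum1:
  assumes "a<n" "b<n"
  shows "(\<Sum>i=1..n-2. Xmat n i (i+1) $$ (a,b)) = (if b = a+1 \<and> a+3 \<le> n then 1 else 0)"
proof -
  have "(\<Sum>i=1..n-2. Xmat n i (i+1) $$ (a,b)) = (\<Sum>i=1..n-2. if i = a+1 then (if b = a+1 then 1 else 0) else 0)"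
    by (rule sum.cong) (use assms in \<open>auto simp: Xmat_def\<close>)
  also have "\<dots> = (if b = a+1 \<and> a+3 \<le> n then 1 else 0)"
    by (subst sum.delta) auto
  finally show ?thesis .
qed

lemma Xsum2:
  assumes "a<n" "b<n"
  shows "(\<Sum>j=2..n. x $ (j - 1) * Xmat n (j - 1) n $$ (a,b)) = (if b = n-1 \<and> a+2 \<le> n then x$(a+1) else 0)"
proof -
  have "(\<Sum>j=2..n. x $ (j - 1) * Xmat n (j - 1) n $$ (a,b)) = (\<Sum>j=2..n. if j = a+2 then (if b = n-1 then x$(a+1) else 0) else 0)"
    by (rule sum.cong) (use assms in \<open>auto simp: Xmat_def\<close>)
  also have "\<dots> = (if b = n-1 \<and> a+2 \<le> n then x$(a+1) else 0)"
    by (subst sum.delta) auto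
  finally show ?thesis .
qed

lemma rep_entry:
  assumes "a<n" "b<n"
  shows "fil_rep n x $$ (a,b) = (if b = a+1 \<and> a+3 \<le> n then x$0 else 0) + (if b = n-1 \<and> a+2 \<le> n then x$(a+1) else 0)"
proof -
  have "fil_rep n x $$ (a,b) = x $ 0 * (\<Sum>i=1..n-2. Xmat n i (i+1) $$ (a,b))
      + (\<Sum>j=2..n. x $ (j - 1) * Xmat n (j - 1) n $$ (a,b))"
    using assms by (simp add: fil_rep_def)
  also have "\<dots> = x $ 0 * (if b = a+1 \<and> a+3 \<le> n then 1 else 0) + (if b = n-1 \<and> a+2 \<le> n then x$(a+1) else 0)"
    by (simp only: Xsum1[OF assms] Xsum2[OF assms])
  finally show ?thesis by simp
qed

lemma rep_prod:
  assumes "a<n" "b<n"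
  shows "(fil_rep n x * fil_rep n y) $$ (a,b) = (if a+3 \<le> n then x$0 * ((if b = a+2 \<and> a+4 \<le> n then y$0 else 0) + (if b = n-1 then y$(a+2) else 0)) else 0)"
proof -
  have "(fil_rep n x * fil_rep n y) $$ (a,b) = (\<Sum>c<n. fil_rep n x $$ (a,c) * fil_rep n y $$ (c,b))"
    by (rule mult_entry[OF rep_carrier rep_carrier assms])
  also have "\<dots> = (\<Sum>c<n. (if c = a+1 \<and> a+3 \<le> n then x$0 else 0) * fil_rep n y $$ (c,b))"
  proof (rule sum.cong)
    fix c assume c: "c \<in> {..<n}"
    show "fil_rep n x $$ (a,c) * fil_rep n y $$ (c,b) = (if c = a+1 \<and> a+3 \<le> n then x$0 else 0) * fil_rep n y $$ (c,b)"
    proof (cases "c = n-1")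
      case True thus ?thesis using assms c by (auto simp: rep_entry)
    next
      case False thus ?thesis using assms c by (auto simp: rep_entry)
    qed
  qed simp
  also have "\<dots> = (if a+3 \<le> n then x$0 * fil_rep n y $$ (a+1,b) else 0)"
  proof (cases "a+3 \<le> n")
    case True
    have "(\<Sum>c<n. (if c = a+1 \<and> a+3 \<le> n then x$0 else 0) * fil_rep n y $$ (c,b)) = (if a+1 = a+1 \<and> a+3 \<le> n then x$0 else 0) * fil_rep n y $$ (a+1,b)"
      by (rule sum_only) (use True in auto)
    thus ?thesis using True by simp
  qed simp
  also have "\<dots> = (if a+3 \<le> n then x$0 * ((if b = a+2 \<and> a+4 \<le> n then y$0 else 0) + (if b = n-1 then y$(a+2) else 0)) else 0)" using assms by (auto simp: rep_entry)
  finally show ?thesis .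
qed




lemma br_term:
  assumes "i<n" "j<n" "k<n"
  shows "x $ i * y $ j * fil_basis_br n i j $ k =
     (if j = k+1 then (if i = 0 then (if 1 \<le> k \<and> k+2 \<le> n then x$0*y$(k+1) else 0) else 0) else 0)
   - (if j = 0 then (if i = k+1 then (if 1 \<le> k \<and> k+2 \<le> n then x$(k+1)*y$0 else 0) else 0) else 0)"
  using assms by (auto simp: fil_basis_br_def)

lemma br_entry:
  assumes "k<n"
  shows "fil_br n x y $ k = (if 1 \<le> k \<and> k+2 \<le> n then x$0*y$(k+1) - x$(k+1)*y$0 else 0)"
proof -
  have "fil_br n x y $ k = (\<Sum>i<n. \<Sum>j<n. x $ i * y $ j * (fil_basis_br n i j) $ k)"
    using assms by (simp add: fil_br_def)
  also have "\<dots> = (\<Sum>i<n. \<Sum>j<n. (if j = k+1 then (if i = 0 then (if 1 \<le> k \<and> k+2 \<le> n then x$0*y$(k+1) else 0) else 0) else 0)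
   - (if j = 0 then (if i = k+1 then (if 1 \<le> k \<and> k+2 \<le> n then x$(k+1)*y$0 else 0) else 0) else 0))"
    using assms by (intro sum.cong refl) (simp add: br_term)
  also have "\<dots> = (if 1 \<le> k \<and> k+2 \<le> n then x$0*y$(k+1) - x$(k+1)*y$0 else 0)"
    using assms by (simp add: sum_subtractf sum.delta if_distrib[of "\<lambda>t. \<Sum>j<n. t"] cong: if_cong)
  finally show ?thesis .
qed

lemma br_carrier: "fil_br n x y \<in> carrier_vec n" by (simp add: fil_br_def)

lemma br_unit:
  assumes "i<n" "j<n"
  shows "fil_br n (unit_vec n i) (unit_vec n j) = fil_basis_br n i j"
proof (rule eq_vecI)
  show "dim_vec (fil_br n (unit_vec n i) (unit_vec n j)) = dim_vec (fil_basis_br n i j)"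
    by (simp add: fil_br_def fil_basis_br_def)
  fix k assume "k < dim_vec (fil_basis_br n i j)"
  hence k: "k<n" by (simp add: fil_basis_br_def split: if_splits)
  show "fil_br n (unit_vec n i) (unit_vec n j) $ k = fil_basis_br n i j $ k"
    using assms k by (auto simp: br_entry fil_basis_br_def)
qed




lemma rep_hom:
  "fil_rep n (fil_br n x y) = commutator (fil_rep n x) (fil_rep n y)"
proof (rule eq_matI)
  fix a b assume ab: "a < dim_row (commutator (fil_rep n x) (fil_rep n y))" "b < dim_col (commutator (fil_rep n x) (fil_rep n y))"
  hence ab: "a<n" "b<n" by (auto simp: commutator_def fil_rep_def)
  have r: "commutator (fil_rep n x) (fil_rep n y) $$ (a,b) = (fil_rep n x * fil_rep n y) $$ (a,b) - (fil_rep n y * fil_rep n x) $$ (a,b)"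
    unfolding commutator_def using ab by (subst index_minus_mat) (auto simp: fil_rep_def)
  show "fil_rep n (fil_br n x y) $$ (a,b) = commutator (fil_rep n x) (fil_rep n y) $$ (a,b)"
    unfolding r rep_prod[OF ab] rep_entry[OF ab]
    using ab by (auto simp: br_entry algebra_simps)
qed (auto simp: commutator_def fil_rep_def)




lemma rep_dims[simp]: "dim_row (fil_rep n x) = n" "dim_col (fil_rep n x) = n"
  by (simp_all add: fil_rep_def)
lemma rep_add:
  assumes "x \<in> carrier_vec n" "y \<in> carrier_vec n"
  shows "fil_rep n (x + y) = fil_rep n x + fil_rep n y"
proof (rule eq_matI)
  fix i j assume ij: "i < dim_row (fil_rep n x + fil_rep n y)" "j < dim_col (fil_rep n x + fil_rep n y)"
  hence ij: "i<n" "j<n" using rep_carrier[of n x] by auto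
  have "(fil_rep n x + fil_rep n y) $$ (i,j) = fil_rep n x $$ (i,j) + fil_rep n y $$ (i,j)"
    using ij rep_carrier[of n y] by (subst index_add_mat) auto
  thus "fil_rep n (x + y) $$ (i,j) = (fil_rep n x + fil_rep n y) $$ (i,j)"
    using ij assms by (auto simp: rep_entry)
qed (use rep_carrier in auto)

lemma rep_smult:
  assumes "x \<in> carrier_vec n"
  shows "fil_rep n (c \<cdot>\<^sub>v x) = c \<cdot>\<^sub>m fil_rep n x"
proof (rule eq_matI)
  fix i j assume ij: "i < dim_row (c \<cdot>\<^sub>m fil_rep n x)" "j < dim_col (c \<cdot>\<^sub>m fil_rep n x)"
  hence ij: "i<n" "j<n" using rep_carrier[of n x] by auto
  have "(c \<cdot>\<^sub>m fil_rep n x) $$ (i,j) = c * fil_rep n x $$ (i,j)"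
    using ij rep_carrier[of n x] by (subst index_smult_mat) auto
  thus "fil_rep n (c \<cdot>\<^sub>v x) $$ (i,j) = (c \<cdot>\<^sub>m fil_rep n x) $$ (i,j)"
    using ij assms by (auto simp: rep_entry algebra_simps)
qed (use rep_carrier in auto)

lemma rep_upper: "fil_rep n x \<in> upper_tri n"
  unfolding upper_tri_def using rep_carrier by (auto simp: rep_entry)

lemma rep_inj:
  assumes "n \<ge> 3" shows "inj_on (fil_rep n) (carrier_vec n)"
proof (rule inj_onI)
  fix x y assume x: "x \<in> carrier_vec n" and y: "y \<in> carrier_vec n" and eq: "fil_rep n x = fil_rep n y"
  show "x = y"
  proof (rule eq_vecI)
    show "dim_vec x = dim_vec y" using x y by simp
    fix k assume "k < dim_vec y"
    hence k: "k<n" using y by simp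
    show "x $ k = y $ k"
    proof (cases k)
      case 0
      have "fil_rep n x $$ (0,1) = fil_rep n y $$ (0,1)" using eq by simp
      moreover have "Suc 0 \<noteq> n - Suc 0" using assms by simp
      ultimately show ?thesis using assms 0 by (simp add: rep_entry)
    next
      case (Suc k')
      have "fil_rep n x $$ (k',n-1) = fil_rep n y $$ (k',n-1)" using eq by simp
      thus ?thesis using assms Suc k by (auto simp: rep_entry split: if_splits)
    qed
  qed
qed



lemma upper_Fl: "X \<in> upper_tri m \<Longrightarrow> X \<in> carrier_mat m m \<and> Fl m 0 X"
  unfolding upper_tri_def Fl_def by auto

lemma lower_bound:
  assumes n: "n \<ge> 3" and L: "lie_subalgebra_h m L" and iso: "lie_iso n (fil_br n) L \<phi>"
  shows "n \<le> m"
proof -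
  let ?e = "\<lambda>i. unit_vec n i :: complex vec"
  have bij: "bij_betw \<phi> (carrier_vec n) L" using iso unfolding lie_iso_def by (elim conjE)
  have sm0: "\<forall>c. \<forall>x\<in>carrier_vec n. \<phi> (c \<cdot>\<^sub>v x) = c \<cdot>\<^sub>m \<phi> x"
    using iso unfolding lie_iso_def by (elim conjE)
  have brh0: "\<forall>x\<in>carrier_vec n. \<forall>y\<in>carrier_vec n. \<phi> (fil_br n x y) = commutator (\<phi> x) (\<phi> y)"
    using iso unfolding lie_iso_def by (elim conjE)
  have sm: "\<phi> (c \<cdot>\<^sub>v x) = c \<cdot>\<^sub>m \<phi> x" if "x\<in>carrier_vec n" for c x
    by (rule sm0[rule_format, OF that])
  have brh: "\<phi> (fil_br n x y) = commutator (\<phi> x) (\<phi> y)" if "x\<in>carrier_vec n" "y\<in>carrier_vec n" for x y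
    by (rule brh0[rule_format, OF that])
  have sub: "L \<subseteq> upper_tri m" using L unfolding lie_subalgebra_h_def by (elim conjE)
  have inL: "\<And>x. x \<in> carrier_vec n \<Longrightarrow> \<phi> x \<in> L" by (rule bij_betw_apply[OF bij])
  have cf: "\<And>x. x \<in> carrier_vec n \<Longrightarrow> \<phi> x \<in> carrier_mat m m \<and> Fl m 0 (\<phi> x)"
    using inL sub upper_Fl by blast
  have z: "\<phi> (0\<^sub>v n) = 0\<^sub>m m m"
  proof -
    have "\<phi> (0 \<cdot>\<^sub>v 0\<^sub>v n) = 0 \<cdot>\<^sub>m \<phi> (0\<^sub>v n)" using sm by simp
    moreover have "(0::complex) \<cdot>\<^sub>v 0\<^sub>v n = 0\<^sub>v n" by auto
    moreover have "(0::complex) \<cdot>\<^sub>m \<phi> (0\<^sub>v n) = 0\<^sub>m m m"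
      using cf[of "0\<^sub>v n"] by (intro eq_matI) auto
    ultimately show ?thesis by simp
  qed
  have ec: "\<And>i. ?e i \<in> carrier_vec n" by simp
  have brs: "\<And>i j. i<n \<Longrightarrow> j<n \<Longrightarrow> commutator (\<phi> (?e i)) (\<phi> (?e j)) = \<phi> (fil_basis_br n i j)"
  proof -
    fix i j assume ij: "i<n" "j<n"
    have "fil_br n (?e i) (?e j) = fil_basis_br n i j" by (rule br_unit[OF ij])
    thus "commutator (\<phi> (?e i)) (\<phi> (?e j)) = \<phi> (fil_basis_br n i j)" using brh[OF ec ec, of i j] by simp
  qed
  define A where "A = \<phi> (?e 0)"
  define C where "C = \<phi> (?e (n-1))"
  have Ac: "A \<in> carrier_mat m m" "Fl m 0 A" using cf[OF ec] unfolding A_def by auto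
  have Cc: "C \<in> carrier_mat m m" "Fl m 0 C" using cf[OF ec] unfolding C_def by auto
  have claim: "t \<le> n-2 \<Longrightarrow> adp A t C = \<phi> (?e (n-1-t))" for t
  proof (induction t)
    case 0 thus ?case by (simp add: C_def)
  next
    case (Suc t)
    hence s1: "adp A (Suc t) C = commutator A (\<phi> (?e (n-1-t)))" by (simp add: adp_Suc)
    have s2: "commutator A (\<phi> (?e (n-1-t))) = \<phi> (fil_basis_br n 0 (n-1-t))" unfolding A_def using n Suc.prems by (intro brs) auto
    have f: "2 \<le> n-1-t" "n-1-t < n" "n-1-t-1 = n-1-Suc t" using n Suc.prems by auto
    have s3: "\<phi> (fil_basis_br n 0 (n-1-t)) = \<phi> (?e (n-1-Suc t))" using f
      by (simp add: fil_basis_br_def)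
    show ?case using s1 s2 s3 by simp
  qed
  have c2: "adp A (n-2) C = \<phi> (?e 1)"
  proof -
    have "adp A (n-2) C = \<phi> (?e (n-1-(n-2)))" by (rule claim) simp
    moreover have "n-1-(n-2) = 1" using n by arith
    ultimately show ?thesis by (simp only:)
  qed
  have kill: "adp A (n-1) C = 0\<^sub>m m m"
  proof -
    have "n - 1 = Suc (n-2)" using n by simp
    hence "adp A (n-1) C = commutator A (\<phi> (?e 1))" using c2
      by (simp add: adp_Suc)
    also have "\<dots> = \<phi> (fil_basis_br n 0 1)" unfolding A_def using n by (intro brs) auto
    also have "\<dots> = 0\<^sub>m m m" using z by (simp add: fil_basis_br_def)
    finally show ?thesis .
  qed
  have nz: "adp A (n-2) C \<noteq> 0\<^sub>m m m"
  proof
    assume "adp A (n-2) C = 0\<^sub>m m m"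
    hence "\<phi> (?e 1) = \<phi> (0\<^sub>v n)" using c2 z by simp
    moreover have "inj_on \<phi> (carrier_vec n)" using bij unfolding bij_betw_def by blast
    ultimately have "?e 1 = 0\<^sub>v n" using inj_onD[of \<phi> "carrier_vec n" "?e 1" "0\<^sub>v n"] by simp
    hence "?e 1 $ 1 = (0\<^sub>v n :: complex vec) $ 1" by simp
    thus False using n by simp
  qed
  have comm: "commutator C (commutator A C) = 0\<^sub>m m m"
  proof -
    have "commutator A C = adp A 1 C" by (simp add: adp_def)
    also have "\<dots> = \<phi> (?e (n-2))" using claim[of 1] n by (simp add: numeral_eq_Suc)
    finally have "commutator C (commutator A C) = \<phi> (fil_basis_br n (n-1) (n-2))"
      unfolding C_def using n by (simp add: brs)
    also have "\<dots> = 0\<^sub>m m m" using z n by (simp add: fil_basis_br_def)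
    finally show ?thesis .
  qed
  show ?thesis by (rule chain_bound[OF Ac Cc n kill nz comm])
qed


theorem proposition5:
  fixes n :: nat
  assumes "n \<ge> 3"
  shows "mu_bar n (fil_br n) = n \<and>
    (\<forall>x\<in>carrier_vec n. fil_rep n x \<in> upper_tri n) \<and>
    (\<forall>x\<in>carrier_vec n. \<forall>y\<in>carrier_vec n. fil_rep n (x + y) = fil_rep n x + fil_rep n y) \<and>
    (\<forall>c. \<forall>x\<in>carrier_vec n. fil_rep n (c \<cdot>\<^sub>v x) = c \<cdot>\<^sub>m fil_rep n x) \<and>
    (\<forall>x\<in>carrier_vec n. \<forall>y\<in>carrier_vec n.
        fil_rep n (fil_br n x y) = commutator (fil_rep n x) (fil_rep n y)) \<and>
    inj_on (fil_rep n) (carrier_vec n)"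
proof -
  let ?L = "fil_rep n ` carrier_vec n"
  have z: "fil_rep n (0\<^sub>v n) = 0\<^sub>m n n"
    by (rule eq_matI) (auto simp: rep_entry)
  have sub: "lie_subalgebra_h n ?L"
    unfolding lie_subalgebra_h_def
  proof (intro conjI ballI allI)
    show "?L \<subseteq> upper_tri n" using rep_upper by blast
    show "0\<^sub>m n n \<in> ?L" using z by (metis image_eqI zero_carrier_vec)
  next
    fix A B assume "A \<in> ?L" "B \<in> ?L"
    then obtain x y where xy: "x \<in> carrier_vec n" "y \<in> carrier_vec n" "A = fil_rep n x" "B = fil_rep n y" by blast
    show "A + B \<in> ?L" using xy rep_add[OF xy(1,2)] by (metis add_carrier_vec image_eqI)
    show "commutator A B \<in> ?L" using xy rep_hom[of n x y] br_carrier[of n x y] by (metis image_eqI)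
  next
    fix c A assume "A \<in> ?L"
    then obtain x where x: "x \<in> carrier_vec n" "A = fil_rep n x" by blast
    show "c \<cdot>\<^sub>m A \<in> ?L" using x rep_smult[OF x(1), of c] by (metis smult_carrier_vec image_eqI)
  qed
  have inj: "inj_on (fil_rep n) (carrier_vec n)" by (rule rep_inj[OF assms])
  have iso: "lie_iso n (fil_br n) ?L (fil_rep n)"
    unfolding lie_iso_def
  proof (intro conjI ballI allI)
    show "bij_betw (fil_rep n) (carrier_vec n) ?L" using inj by (rule inj_on_imp_bij_betw)
  qed (auto simp: rep_add rep_smult rep_hom)
  have mu: "mu_bar n (fil_br n) = n"
    unfolding mu_bar_def
  proof (rule Least_equality)
    show "\<exists>L \<phi>. lie_subalgebra_h n L \<and> lie_iso n (fil_br n) L \<phi>" using sub iso by blast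
  next
    fix m assume "\<exists>L \<phi>. lie_subalgebra_h m L \<and> lie_iso n (fil_br n) L \<phi>"
    then obtain L \<phi> where "lie_subalgebra_h m L" "lie_iso n (fil_br n) L \<phi>" by blast
    thus "n \<le> m" using lower_bound[OF assms] by blast
  qed
  show ?thesis
  proof (intro conjI ballI allI)
    show "mu_bar n (fil_br n) = n" by (rule mu)
    show "inj_on (fil_rep n) (carrier_vec n)" by (rule inj)
  qed (auto simp: rep_upper rep_add rep_smult rep_hom)
qed

end
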